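(* Let $\mathbf{A}\in\mathsf{K}$ be such that the lowest fibre $\mathbf{A}_0$ of the Płonka sum representation of its $\{\wedge,\vee,\neg,0,1\}$-reduct is a two-element Boolean algebra. If the fibres $\mathbf{A}_i$ and $\mathbf{A}_j$ are non-trivial, then the fibre $\mathbf{A}_{i\vee j}$ is non-trivial.
   Context: $\mathsf{K}$ is the variety of type $\langle\wedge,\vee,\neg,J_2,0,1\rangle$ axiomatised by: - $x\vee x\approx x$; - $x\vee y\approx y\vee x$; - $x\vee(y\vee z)\approx(x\vee y)\vee z$; - $\neg\neg x\approx x$; - $x\wedge y\approx\neg(\neg x\vee\neg y)$; - $x\wedge(\neg x\vee y)\approx x\wedge y$; - $0\vee x\approx x$; - $1\approx\neg0$; - $J_2x\vee\neg J_2x\approx1$; - $x\vee J_2y\approx x\vee J_2(x\vee y)$; - $x\wedge J_2x\approx x$; - $J_2(x\wedge\neg x)\approx0$. The $\{\wedge,\vee,\neg,0,1\}$-reduct of any member of $\mathsf{K}$ is an involutive bisemilattice. Hence it is canonically a Płonka sum of Boolean algebras $\mathbf{A}_i$ (fibres) over a join-semilattice $\langle I,\vee,0\rangle$ with least element $0$, with homomorphisms $p_{ij}$ for $i\le j$. Operations are computed in the fibre indexed by the join of the arguments' indices, after mapping them there via the $p_{ij}$. Two elements $a,b$ lie in the same fibre iff $a\wedge(a\vee b)=a$ and $b\wedge(b\vee a)=b$. A fibre is trivial if it has one element. *)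

theory Defs
  imports Main
begin

definition K_algebra ::
  "('a \<Rightarrow> 'a \<Rightarrow> 'a) \<Rightarrow> ('a \<Rightarrow> 'a \<Rightarrow> 'a) \<Rightarrow> ('a \<Rightarrow> 'a) \<Rightarrow> ('a \<Rightarrow> 'a) \<Rightarrow> 'a \<Rightarrow> 'a \<Rightarrow> bool" where
  "K_algebra meet join neg J2 zero one \<longleftrightarrow>
     (\<forall>x. join x x = x) \<and>
     (\<forall>x y. join x y = join y x) \<and>
     (\<forall>x y z. join x (join y z) = join (join x y) z) \<and>
     (\<forall>x. neg (neg x) = x) \<and>
     (\<forall>x y. meet x y = neg (join (neg x) (neg y))) \<and>
     (\<forall>x y. meet x (join (neg x) y) = meet x y) \<and>
     (\<forall>x. join zero x = x) \<and>
     one = neg zero \<and>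
     (\<forall>x. join (J2 x) (neg (J2 x)) = one) \<and>
     (\<forall>x y. join x (J2 y) = join x (J2 (join x y))) \<and>
     (\<forall>x. meet x (J2 x) = x) \<and>
     (\<forall>x. J2 (meet x (neg x)) = zero)"

text \<open>Two elements lie in the same fibre of the Plonka sum decomposition of the
  involutive-bisemilattice reduct.\<close>

definition same_fibre :: "('a \<Rightarrow> 'a \<Rightarrow> 'a) \<Rightarrow> ('a \<Rightarrow> 'a \<Rightarrow> 'a) \<Rightarrow> 'a \<Rightarrow> 'a \<Rightarrow> bool" where
  "same_fibre meet join a b \<longleftrightarrow> meet a (join a b) = a \<and> meet b (join b a) = b"

definition fibre :: "('a \<Rightarrow> 'a \<Rightarrow> 'a) \<Rightarrow> ('a \<Rightarrow> 'a \<Rightarrow> 'a) \<Rightarrow> 'a \<Rightarrow> 'a set" where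
  "fibre meet join a = {b. same_fibre meet join a b}"

definition nontrivial :: "'a set \<Rightarrow> bool" where
  "nontrivial F \<longleftrightarrow> (\<exists>x\<in>F. \<exists>y\<in>F. x \<noteq> y)"

end

theory Submission
  imports Defs
begin

locale KA =
  fixes meet join :: "'a \<Rightarrow> 'a \<Rightarrow> 'a" and neg J2 :: "'a \<Rightarrow> 'a" and zero one :: 'a
  assumes j_idem: "join x x = x"
  and j_comm: "join x y = join y x"
  and j_assoc: "join x (join y z) = join (join x y) z"
  and nn: "neg (neg x) = x"
  and m_def: "meet x y = neg (join (neg x) (neg y))"
  and ax6: "meet x (join (neg x) y) = meet x y"
  and z_l: "join zero x = x"
  and one_def: "one = neg zero"
  and jA: "join (J2 x) (neg (J2 x)) = one"
  and jB: "join x (J2 y) = join x (J2 (join x y))"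
  and jC: "meet x (J2 x) = x"
  and jD: "J2 (meet x (neg x)) = zero"
begin
lemma dual6: "join x (meet (neg x) y) = join x y"
  by (metis ax6 m_def nn)
lemma I1: "join (meet a (neg a)) (join b (neg b)) = join (join a b) (neg (join a b))"
  by (metis dual6 j_assoc j_comm m_def one_def z_l)
lemma I2: "meet (join t (neg t)) (neg (join t (neg t))) = meet t (neg t)"
  by (metis ax6 j_comm m_def nn)
lemma I3: "meet t zero = meet t (neg t)"
  by (metis ax6 j_comm z_l)
lemma I4: "join (meet t (neg t)) one = join t (neg t)"
  by (metis j_comm nn ax6 m_def z_l one_def)
lemma I5a: "meet s (join s (meet s (neg s))) = s"
  by (metis ax6 j_comm j_idem m_def nn)
lemma I5b: "meet (meet s (neg s)) (join (meet s (neg s)) s) = meet s (neg s)"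
  by (metis ax6 j_comm m_def nn)
lemma I5c: "meet s (join s (join s (neg s))) = s"
  by (metis ax6 j_comm j_idem m_def nn)
lemma I5d: "meet (join s (neg s)) (join (join s (neg s)) s) = join s (neg s)"
  by (simp add: j_assoc j_comm j_idem m_def nn)
lemma S1: "meet c (join c a) = c \<Longrightarrow> meet a (join a c) = a \<Longrightarrow> meet a (neg a) = join a (neg a) \<Longrightarrow> c = meet a (neg a)"
  by (metis ax6 j_comm m_def nn)

lemma mzz: "meet zero zero = zero" by (metis j_idem nn m_def)
lemma mzo: "meet zero one = zero" by (metis I5c one_def z_l)
lemma moo: "meet one one = one" by (metis m_def j_idem nn)
lemma mzJ: "meet zero (J2 t) = zero" by (metis dual6 jA j_comm m_def nn one_def)
lemma mJJ: "meet (J2 t) (J2 t) = J2 t" using nn m_def j_idem by fastforce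

lemma jz: "join x zero = x" using j_comm z_l by metis

lemma zero_fib: "zero \<in> fibre meet join zero"
  unfolding fibre_def same_fibre_def mem_Collect_eq by (simp only: z_l mzz)
lemma one_fib: "one \<in> fibre meet join zero"
  unfolding fibre_def same_fibre_def mem_Collect_eq by (simp only: z_l jz mzo moo)
lemma J2_fib: "J2 t \<in> fibre meet join zero"
  unfolding fibre_def same_fibre_def mem_Collect_eq by (simp only: z_l jz mzJ mJJ)

lemma zero_ne_one:
  assumes "card (fibre meet join zero) = 2" shows "zero \<noteq> one"
proof
  assume e: "zero = one"
  have "fibre meet join zero \<subseteq> {zero}"
  proof
    fix t assume "t \<in> fibre meet join zero"
    then have "meet zero (join zero t) = zero" unfolding fibre_def same_fibre_def by simp
    then have "neg (join (neg zero) (neg t)) = zero" by (simp only: z_l m_def)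
    moreover have "neg zero = zero" using e one_def by simp
    ultimately have "neg (join zero (neg t)) = zero" by simp
    then have "t = zero" by (simp only: z_l nn)
    then show "t \<in> {zero}" by simp
  qed
  then have "card (fibre meet join zero) \<le> card {zero}"
    by (intro card_mono) auto
  with assms show False by simp
qed

lemma J2_vals:
  assumes "card (fibre meet join zero) = 2" shows "J2 t = zero \<or> J2 t = one"
proof (rule ccontr)
  assume n: "\<not> (J2 t = zero \<or> J2 t = one)"
  have fin: "finite (fibre meet join zero)" using assms card.infinite by fastforce
  have sub: "{zero, one, J2 t} \<subseteq> fibre meet join zero" using zero_fib one_fib J2_fib by auto
  have "card {zero, one, J2 t} = 3" using n zero_ne_one[OF assms] by auto
  with card_mono[OF fin sub] assms show False by simp
qed

lemma nontriv_ne: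
  assumes "nontrivial (fibre meet join a)" shows "meet a (neg a) \<noteq> join a (neg a)"
proof
  assume e: "meet a (neg a) = join a (neg a)"
  from assms obtain c d where c: "c \<in> fibre meet join a" and d: "d \<in> fibre meet join a" and cd: "c \<noteq> d"
    unfolding nontrivial_def by blast
  have "c = meet a (neg a)" using c e S1 unfolding fibre_def same_fibre_def by blast
  moreover have "d = meet a (neg a)" using d e S1 unfolding fibre_def same_fibre_def by blast
  ultimately show False using cd by simp
qed

lemma J2_top:
  assumes "card (fibre meet join zero) = 2" and "nontrivial (fibre meet join a)"
  shows "J2 (join a (neg a)) = one"
proof -
  have "J2 (join a (neg a)) \<noteq> zero"
  proof
    assume z: "J2 (join a (neg a)) = zero"
    have "join a (neg a) = meet (join a (neg a)) (J2 (join a (neg a)))" using jC by simp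
    also have "\<dots> = meet a (neg a)" using z I3 I2 by simp
    finally show False using nontriv_ne[OF assms(2)] by simp
  qed
  then show ?thesis using J2_vals[OF assms(1)] by blast
qed

lemma main:
  assumes "card (fibre meet join zero) = 2"
    and "nontrivial (fibre meet join a)"
    and "nontrivial (fibre meet join b)"
  shows "nontrivial (fibre meet join (join a b))"
proof -
  define s where "s = join a b"
  have ne: "meet s (neg s) \<noteq> join s (neg s)"
  proof
    assume e: "meet s (neg s) = join s (neg s)"
    have "join (meet a (neg a)) (J2 (join b (neg b))) =
          join (meet a (neg a)) (J2 (join (meet a (neg a)) (join b (neg b))))" by (rule jB)
    also have "join (meet a (neg a)) (join b (neg b)) = join s (neg s)" using I1 s_def by simp
    also have "J2 (join s (neg s)) = zero" using e jD by metis
    finally have "join (meet a (neg a)) one = meet a (neg a)"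
      using J2_top[OF assms(1,3)] by (simp add: j_comm z_l)
    then show False using I4 nontriv_ne[OF assms(2)] by simp
  qed
  have "meet s (neg s) \<in> fibre meet join s" "join s (neg s) \<in> fibre meet join s"
    unfolding fibre_def same_fibre_def using I5a I5b I5c I5d by auto
  then show ?thesis unfolding nontrivial_def s_def[symmetric] using ne by blast
qed
end

theorem lemma4p4:
  fixes meet join :: "'a \<Rightarrow> 'a \<Rightarrow> 'a" and neg J2 :: "'a \<Rightarrow> 'a" and zero one :: 'a
    and a b :: 'a
  assumes "K_algebra meet join neg J2 zero one"
    and "card (fibre meet join zero) = 2"
    and "nontrivial (fibre meet join a)"
    and "nontrivial (fibre meet join b)"
  shows "nontrivial (fibre meet join (join a b))"
proof -
  interpret KA meet join neg J2 zero one
    using assms(1) unfolding K_algebra_def by unfold_locales blast+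
  show ?thesis using main assms(2-4) by blast
qed

end
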